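(* Let $G$ be a two-player game with a finite set $\mathcal{P}$ of positions as in the context, let $x$ be a Richman function for $G$, and let $T$ be the set defined from $x$ as in the context. If every position that is quiescent with respect to $x$ belongs to $T$, then every position belongs to $T$.
   Context: The game is given by a finite set $\mathcal{P}$ of positions; each non-terminal position $P$ has a nonempty set of White options $P_w$ and a nonempty set of Black options $P_b$. Terminal positions are designated as White wins or Black wins. A Richman function is a function $x:\mathcal{P}\to[0,1]$ with $x(P)=1$ at terminal White wins, $x(P)=0$ at terminal Black wins, and $x(P)=\frac12(\max_w x(P_w)+\min_b x(P_b))$ at every non-terminal $P$. A White move from $P$ to $P_w$ is $x$-greedy if $x(P_w)=\max_{w'}x(P_{w'})$. Let $T_0$ be the set of terminal positions, and for $n\ge0$ let $T_{n+1}$ consist of the positions that belong to $T_n$, or have an $x$-greedy White option in $T_n$, or have all of their Black options in $T_n$; let $T=\bigcup_n T_n$. A non-terminal position $P$ is quiescent with respect to $x$ if $\min_b x(P_b)=\max_w x(P_w)$. *)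

theory Defs
  imports Main "HOL-Library.FuncSet" Complex_Main
begin

text \<open>A finite game: positions \<open>Pos\<close>, a set \<open>Term\<close> of terminal positions, the set \<open>WWin\<close>
 of terminal White wins (terminal positions not in \<open>WWin\<close> are Black wins),
 and White/Black option maps \<open>Wo\<close>, \<open>Bo\<close>.\<close>

definition game :: "'p set \<Rightarrow> 'p set \<Rightarrow> 'p set \<Rightarrow> ('p \<Rightarrow> 'p set) \<Rightarrow> ('p \<Rightarrow> 'p set) \<Rightarrow> bool" where
  "game Pos Term WWin Wo Bo \<longleftrightarrow> finite Pos \<and> Term \<subseteq> Pos \<and> WWin \<subseteq> Term \<and>
     (\<forall>P\<in>Pos - Term. Wo P \<noteq> {} \<and> Wo P \<subseteq> Pos \<and> Bo P \<noteq> {} \<and> Bo P \<subseteq> Pos)"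

definition richman :: "'p set \<Rightarrow> 'p set \<Rightarrow> 'p set \<Rightarrow> ('p \<Rightarrow> 'p set) \<Rightarrow> ('p \<Rightarrow> 'p set) \<Rightarrow> ('p \<Rightarrow> real) \<Rightarrow> bool" where
  "richman Pos Term WWin Wo Bo x \<longleftrightarrow>
     (\<forall>P\<in>Pos. 0 \<le> x P \<and> x P \<le> 1) \<and>
     (\<forall>P\<in>WWin. x P = 1) \<and>
     (\<forall>P\<in>Term - WWin. x P = 0) \<and>
     (\<forall>P\<in>Pos - Term. x P = (Max (x ` Wo P) + Min (x ` Bo P)) / 2)"

definition greedy :: "('p \<Rightarrow> 'p set) \<Rightarrow> ('p \<Rightarrow> real) \<Rightarrow> 'p \<Rightarrow> 'p \<Rightarrow> bool" where
  "greedy Wo x P Q \<longleftrightarrow> Q \<in> Wo P \<and> x Q = Max (x ` Wo P)"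

fun Tn :: "'p set \<Rightarrow> 'p set \<Rightarrow> ('p \<Rightarrow> 'p set) \<Rightarrow> ('p \<Rightarrow> 'p set) \<Rightarrow> ('p \<Rightarrow> real) \<Rightarrow> nat \<Rightarrow> 'p set" where
  "Tn Pos Term Wo Bo x 0 = Term"
| "Tn Pos Term Wo Bo x (Suc n) =
     {P \<in> Pos. P \<in> Tn Pos Term Wo Bo x n
        \<or> (\<exists>Q. greedy Wo x P Q \<and> Q \<in> Tn Pos Term Wo Bo x n)
        \<or> Bo P \<subseteq> Tn Pos Term Wo Bo x n}"

definition Tset :: "'p set \<Rightarrow> 'p set \<Rightarrow> ('p \<Rightarrow> 'p set) \<Rightarrow> ('p \<Rightarrow> 'p set) \<Rightarrow> ('p \<Rightarrow> real) \<Rightarrow> 'p set" where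
  "Tset Pos Term Wo Bo x = (\<Union>n. Tn Pos Term Wo Bo x n)"

definition quiescent :: "'p set \<Rightarrow> ('p \<Rightarrow> 'p set) \<Rightarrow> ('p \<Rightarrow> 'p set) \<Rightarrow> ('p \<Rightarrow> real) \<Rightarrow> 'p \<Rightarrow> bool" where
  "quiescent Term Wo Bo x P \<longleftrightarrow> P \<notin> Term \<and> Min (x ` Bo P) = Max (x ` Wo P)"

end

theory Submission
  imports Defs
begin

lemma Tn_sub:
  assumes "Term \<subseteq> Pos" shows "Tn Pos Term Wo Bo x n \<subseteq> Pos"
  using assms by (cases n) auto

lemma Tn_mono:
  assumes "Term \<subseteq> Pos" and "m \<le> n"
  shows "Tn Pos Term Wo Bo x m \<subseteq> Tn Pos Term Wo Bo x n"
proof -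
  have "Tn Pos Term Wo Bo x k \<subseteq> Tn Pos Term Wo Bo x (Suc k)" for k
    using Tn_sub[OF assms(1), of Wo Bo x k] by auto
  then show ?thesis using lift_Suc_mono_le[of "Tn Pos Term Wo Bo x"] assms(2) by blast
qed

theorem proposition3:
  fixes Pos Term WWin :: "'p set" and Wo Bo :: "'p \<Rightarrow> 'p set" and x :: "'p \<Rightarrow> real"
  assumes "game Pos Term WWin Wo Bo"
    and "richman Pos Term WWin Wo Bo x"
    and "\<forall>P\<in>Pos. quiescent Term Wo Bo x P \<longrightarrow> P \<in> Tset Pos Term Wo Bo x"
  shows "Pos \<subseteq> Tset Pos Term Wo Bo x"
proof (rule ccontr)
  let ?T = "Tset Pos Term Wo Bo x"
  have fin: "finite Pos" and TP: "Term \<subseteq> Pos"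
    and opt: "\<And>P. P \<in> Pos - Term \<Longrightarrow> Wo P \<noteq> {} \<and> Wo P \<subseteq> Pos \<and> Bo P \<noteq> {} \<and> Bo P \<subseteq> Pos"
    using assms(1) unfolding game_def by auto
  have rich: "\<And>P. P \<in> Pos - Term \<Longrightarrow> x P = (Max (x ` Wo P) + Min (x ` Bo P)) / 2"
    using assms(2) unfolding richman_def by auto
  have termT: "Term \<subseteq> ?T" unfolding Tset_def by (metis Tn.simps(1) UN_upper UNIV_I)
  have greedyT: "P \<in> ?T" if "P \<in> Pos" "greedy Wo x P Q" "Q \<in> ?T" for P Q
  proof -
    from that(3) obtain n where "Q \<in> Tn Pos Term Wo Bo x n" unfolding Tset_def by auto
    then have "P \<in> Tn Pos Term Wo Bo x (Suc n)" using that by auto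
    then show ?thesis unfolding Tset_def by (rule UN_I[OF UNIV_I])
  qed
  have blackT: "P \<in> ?T" if "P \<in> Pos" "finite (Bo P)" "Bo P \<subseteq> ?T" for P
  proof -
    have "\<forall>Q\<in>Bo P. \<exists>n. Q \<in> Tn Pos Term Wo Bo x n" using that(3) unfolding Tset_def by auto
    then obtain f where f: "\<forall>Q\<in>Bo P. Q \<in> Tn Pos Term Wo Bo x (f Q)" by metis
    define N where "N = Max (f ` Bo P)"
    have "Bo P \<subseteq> Tn Pos Term Wo Bo x N"
    proof
      fix Q assume q: "Q \<in> Bo P"
      have "f Q \<le> N" unfolding N_def using that(2) q by auto
      then show "Q \<in> Tn Pos Term Wo Bo x N" using f q Tn_mono[OF TP] by blast
    qed
    then have "P \<in> Tn Pos Term Wo Bo x (Suc N)" using that(1) by auto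
    then show ?thesis unfolding Tset_def by (rule UN_I[OF UNIV_I])
  qed
  assume "\<not> Pos \<subseteq> ?T"
  define S where "S = Pos - ?T"
  have Sne: "S \<noteq> {}" and Sfin: "finite S" using \<open>\<not> Pos \<subseteq> ?T\<close> fin unfolding S_def by auto
  have "Max (x ` S) \<in> x ` S" using Sfin Sne by simp
  then obtain P where PS: "P \<in> S" and PM: "x P = Max (x ` S)" by auto
  have Pmax: "\<forall>R\<in>S. x R \<le> x P" using PM Sfin by simp
  have PPos: "P \<in> Pos" and PT: "P \<notin> ?T" using PS unfolding S_def by auto
  have PnT: "P \<notin> Term" using PT termT by auto
  have o: "Wo P \<noteq> {}" "Wo P \<subseteq> Pos" "Bo P \<noteq> {}" "Bo P \<subseteq> Pos" using opt PPos PnT by auto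
  have fW: "finite (Wo P)" and fB: "finite (Bo P)" using o fin finite_subset by auto
  have nq: "Min (x ` Bo P) \<noteq> Max (x ` Wo P)"
    using assms(3) PPos PT PnT unfolding quiescent_def by auto
  have xP: "x P = (Max (x ` Wo P) + Min (x ` Bo P)) / 2" using rich PPos PnT by auto
  show False
  proof (cases "Max (x ` Wo P) > Min (x ` Bo P)")
    case True
    obtain Q where Q: "Q \<in> Wo P" "x Q = Max (x ` Wo P)"
    proof -
    have "Max (x ` Wo P) \<in> x ` Wo P" using fW o(1) by simp
    then show ?thesis using that by auto
  qed
    have g: "greedy Wo x P Q" unfolding greedy_def using Q by auto
    have "Q \<notin> ?T" using greedyT[OF PPos g] PT by auto
    then have "Q \<in> S" using Q o unfolding S_def by auto
    moreover have "x Q > x P" using Q True xP by auto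
    ultimately show False using Pmax by (meson not_le)
  next
    case False
    then have lt: "Max (x ` Wo P) < Min (x ` Bo P)" using nq by auto
    have "\<not> Bo P \<subseteq> ?T" using blackT PPos fB PT by auto
    then obtain Q where Q: "Q \<in> Bo P" "Q \<notin> ?T" by auto
    then have "Q \<in> S" using o unfolding S_def by auto
    moreover have "x Q \<ge> Min (x ` Bo P)" using Q fB by auto
    moreover have "x P < Min (x ` Bo P)" using lt xP by simp
    ultimately show False using Pmax by (meson le_less_trans not_le)
  qed
qed

end
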